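(* Let $f:\mathbb{R}^n\to\mathbb{R}$ be twice continuously differentiable with $L$-Lipschitz gradient, let $\alpha\in(0,\frac1L)$, and let $x^*$ be a strict saddle point of $f$. Then the Jacobian $D[g_{\alpha(-f)}]^{-1}(x^* )$ of the inverse of $g_{\alpha(-f)}=g^1_{\alpha(-f)}\circ\cdots\circ g^p_{\alpha(-f)}$ at $x^*$ has at least one eigenvalue whose modulus is strictly greater than one.
   Context: $\|\nabla f(x)-\nabla f(y)\|\le L\|x-y\|$ for all $x,y$, $L>0$. The variable is partitioned as $x=(x(1),\dots,x(p))$, $x(s)\in\mathbb{R}^{n_s}$, $\sum_sn_s=n$; $U_s\in\mathbb{R}^{n\times n_s}$ is the $s$-th block-column of $I_n$ and $\nabla_sf(x)=U_s^T\nabla f(x)$. Define $g^s_{\alpha(-f)}(x)=x+\alpha U_s\nabla_s f(x)$; for $0<\alpha<1/L$ the map $g_{\alpha(-f)}$ is a diffeomorphism (its inverse is the PBCD iteration map). A strict saddle point is $x^*$ with $\nabla f(x^* )=0$ and $\lambda_{\min}(\nabla^2f(x^* ))<0$. *)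

theory Defs
  imports "HOL-Analysis.Analysis"
begin

text \<open>Block-coordinate gradient step g^s_{alpha(-f)}(x) = x + alpha U_s grad_s f(x),
  where the block s is given as a set S of coordinates.\<close>
definition block_step ::
  "real \<Rightarrow> (real^'n \<Rightarrow> real^'n) \<Rightarrow> 'n set \<Rightarrow> real^'n \<Rightarrow> real^'n" where
  "block_step \<alpha> gradf S x = x + \<alpha> *\<^sub>R (\<chi> i. if i \<in> S then gradf x $ i else 0)"

text \<open>g_{alpha(-f)} = g^1 \<circ> ... \<circ> g^p for the ordered list of blocks [B1,...,Bp].\<close>
definition block_map ::
  "real \<Rightarrow> (real^'n \<Rightarrow> real^'n) \<Rightarrow> 'n set list \<Rightarrow> real^'n \<Rightarrow> real^'n" where
  "block_map \<alpha> gradf Bs = foldr (\<lambda>S h. block_step \<alpha> gradf S \<circ> h) Bs id"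

text \<open>Ordered partition of the coordinate set into nonempty disjoint blocks.\<close>
definition block_partition :: "'n set list \<Rightarrow> bool" where
  "block_partition Bs \<longleftrightarrow> (\<forall>S \<in> set Bs. S \<noteq> {}) \<and>
     (\<forall>i<length Bs. \<forall>j<length Bs. i \<noteq> j \<longrightarrow> Bs ! i \<inter> Bs ! j = {}) \<and>
     \<Union>(set Bs) = UNIV"

text \<open>Real eigenvalues of a real square matrix and the smallest one.\<close>
definition real_eigenvalues :: "real^'n^'n \<Rightarrow> real set" where
  "real_eigenvalues A = {c. \<exists>v. v \<noteq> 0 \<and> A *v v = c *\<^sub>R v}"

definition lambda_min :: "real^'n^'n \<Rightarrow> real" where
  "lambda_min A = Min (real_eigenvalues A)"

text \<open>(Complex) eigenvalues of a real square matrix.\<close>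
definition complex_eigenvalues :: "real^'n^'n \<Rightarrow> complex set" where
  "complex_eigenvalues A =
     {\<mu>. \<exists>v :: complex^'n. v \<noteq> 0 \<and> (\<chi> i j. complex_of_real (A $ i $ j)) *v v = \<mu> *s v}"

end

theory Submission
  imports Defs "Jordan_Normal_Form.Spectral_Radius"
begin

no_notation vec_index (infixl "$" 100)
no_notation scalar_prod (infix "\<bullet>" 70)
unbundle no m_inv_syntax

lemma cvec_eqI: "(\<And>i. x $ i = y $ i) \<Longrightarrow> x = y"
  by (simp add: Finite_Cartesian_Product.vec_eq_iff)

definition enum_n :: "nat \<Rightarrow> 'n::finite" where
  "enum_n = (SOME h. bij_betw h {0..<CARD('n)} (UNIV::'n set))"

lemma bij_enum_n: "bij_betw (enum_n :: nat \<Rightarrow> 'n::finite) {0..<CARD('n)} UNIV"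
proof -
  have "\<exists>h. bij_betw h {0..<card (UNIV::'n set)} (UNIV::'n set)"
    by (rule ex_bij_betw_nat_finite) simp
  then show ?thesis unfolding enum_n_def by (rule someI_ex)
qed

definition ienum_n :: "'n::finite \<Rightarrow> nat" where
  "ienum_n = inv_into {0..<CARD('n)} enum_n"

lemma ienum_lt: "ienum_n (l::'n::finite) < CARD('n)"
  using bij_enum_n[where 'n='n] unfolding ienum_n_def bij_betw_def
  by (metis UNIV_I atLeastLessThan_iff inv_into_into)

lemma enum_ienum[simp]: "enum_n (ienum_n (l::'n::finite)) = l"
  using bij_enum_n[where 'n='n] unfolding ienum_n_def bij_betw_def
  by (simp add: f_inv_into_f)

lemma ienum_enum[simp]: "i < CARD('n::finite) \<Longrightarrow> ienum_n (enum_n i :: 'n) = i"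
  using bij_enum_n[where 'n='n] unfolding ienum_n_def bij_betw_def
  by (simp add: inv_into_f_f)

definition toM :: "real^'n::finite^'n \<Rightarrow> complex mat" where
  "toM B = mat CARD('n) CARD('n) (\<lambda>(i,j). complex_of_real (B $ enum_n i $ enum_n j))"

definition toV :: "real^'n::finite \<Rightarrow> complex Matrix.vec" where
  "toV x = Matrix.vec CARD('n) (\<lambda>i. complex_of_real (x $ enum_n i))"

definition fromV :: "complex Matrix.vec \<Rightarrow> complex^'n::finite" where
  "fromV v = (\<chi> l. vec_index v (ienum_n l))"

lemma toM_carrier: "toM (B::real^'n::finite^'n) \<in> carrier_mat CARD('n) CARD('n)"
  unfolding toM_def by simp

lemma dim_toM[simp]: "dim_row (toM (B::real^'n::finite^'n)) = CARD('n)" "dim_col (toM B) = CARD('n)"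
  unfolding toM_def by simp_all

lemma toV_carrier: "toV (x::real^'n::finite) \<in> carrier_vec CARD('n)"
  unfolding toV_def by simp

lemma toM_mult_index:
  fixes B :: "real^'n::finite^'n"
  assumes i: "i < CARD('n)" and v: "v \<in> carrier_vec CARD('n)"
  shows "vec_index (toM B *\<^sub>v v) i = (\<Sum>l\<in>UNIV. complex_of_real (B $ enum_n i $ l) * fromV v $ l)"
proof -
  have "vec_index (toM B *\<^sub>v v) i = (\<Sum>j = 0..<CARD('n). complex_of_real (B $ enum_n i $ enum_n j) * vec_index v j)"
    using i v unfolding toM_def by (simp add: scalar_prod_def)
  also have "\<dots> = (\<Sum>j = 0..<CARD('n). (\<lambda>l. complex_of_real (B $ enum_n i $ l) * fromV v $ l) (enum_n j))"
    unfolding fromV_def by (intro sum.cong) auto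
  also have "\<dots> = (\<Sum>l\<in>UNIV. complex_of_real (B $ enum_n i $ l) * fromV v $ l)"
    by (rule sum.reindex_bij_betw[OF bij_enum_n])
  finally show ?thesis .
qed


lemma fromV_toV_nth: "fromV (toV (x::real^'n::finite)) $ l = complex_of_real (x $ l)"
  unfolding fromV_def toV_def using ienum_lt[of l] by simp

lemma toM_toV: "toM B *\<^sub>v toV x = toV (B *v (x::real^'n::finite))"
proof (rule eq_vecI)
  show "dim_vec (toM B *\<^sub>v toV x) = dim_vec (toV (B *v x))"
    unfolding toM_def toV_def by simp
  fix i assume "i < dim_vec (toV (B *v x))"
  then have i: "i < CARD('n)" unfolding toV_def by simp
  show "vec_index (toM B *\<^sub>v toV x) i = vec_index (toV (B *v x)) i"
    by (simp add: toM_mult_index[OF i toV_carrier] fromV_toV_nth)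
      (simp add: toV_def i matrix_vector_mult_def)
qed

lemma toM_pow_toV: "(toM B ^\<^sub>m k) *\<^sub>v toV x = toV ((((*v) (B::real^'n::finite^'n)) ^^ k) x)"
proof (induction k arbitrary: x)
  case 0
  show ?case using toV_carrier[of x] by simp
next
  case (Suc k)
  have "(toM B ^\<^sub>m Suc k) *\<^sub>v toV x = (toM B ^\<^sub>m k * toM B) *\<^sub>v toV x" by simp
  also have "\<dots> = (toM B ^\<^sub>m k) *\<^sub>v (toM B *\<^sub>v toV x)"
    by (rule assoc_mult_mat_vec[OF pow_carrier_mat[OF toM_carrier] toM_carrier toV_carrier])
  also have "\<dots> = toV ((((*v) B) ^^ k) (B *v x))" by (simp add: toM_toV Suc)
  also have "(((*v) B) ^^ k) (B *v x) = (((*v) B) ^^ Suc k) x" unfolding funpow_Suc_right by simp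
  finally show ?case .
qed

lemma eig_to_pair:
  fixes B :: "real^'n::finite^'n"
  assumes ev: "eigenvector (toM B) v \<mu>"
  shows "\<exists>x y. (x \<noteq> 0 \<or> y \<noteq> 0) \<and> B *v x = Re \<mu> *\<^sub>R x - Im \<mu> *\<^sub>R y
      \<and> B *v y = Im \<mu> *\<^sub>R x + Re \<mu> *\<^sub>R y"
proof -
  from ev have v: "v \<in> carrier_vec CARD('n)" and v0: "v \<noteq> 0\<^sub>v CARD('n)"
    and eq: "toM B *\<^sub>v v = \<mu> \<cdot>\<^sub>v v"
    unfolding eigenvector_def by auto
  define z where "z = (fromV v :: complex^'n)"
  have zeq: "(\<Sum>k\<in>UNIV. complex_of_real (B $ l $ k) * z $ k) = \<mu> * z $ l" for l
  proof -
    have "\<mu> * z $ l = vec_index (\<mu> \<cdot>\<^sub>v v) (ienum_n l)"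
      using v ienum_lt[of l] by (simp add: z_def fromV_def)
    also have "\<dots> = vec_index (toM B *\<^sub>v v) (ienum_n l)" by (simp add: eq)
    also have "\<dots> = (\<Sum>k\<in>UNIV. complex_of_real (B $ enum_n (ienum_n l) $ k) * z $ k)"
      unfolding z_def by (rule toM_mult_index[OF ienum_lt v])
    finally show ?thesis by simp
  qed
  define x where "x = (\<chi> l. Re (z $ l))"
  define y where "y = (\<chi> l. Im (z $ l))"
  have "B *v x = Re \<mu> *\<^sub>R x - Im \<mu> *\<^sub>R y"
  proof (rule cvec_eqI)
    fix l
    have "(B *v x) $ l = Re (\<Sum>k\<in>UNIV. complex_of_real (B $ l $ k) * z $ k)"
      unfolding x_def matrix_vector_mult_def by (simp add: Re_sum)
    also have "\<dots> = Re (\<mu> * z $ l)" by (simp add: zeq)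
    finally show "(B *v x) $ l = (Re \<mu> *\<^sub>R x - Im \<mu> *\<^sub>R y) $ l"
      unfolding x_def y_def by simp
  qed
  moreover have "B *v y = Im \<mu> *\<^sub>R x + Re \<mu> *\<^sub>R y"
  proof (rule cvec_eqI)
    fix l
    have "(B *v y) $ l = Im (\<Sum>k\<in>UNIV. complex_of_real (B $ l $ k) * z $ k)"
      unfolding y_def matrix_vector_mult_def by (simp add: Im_sum)
    also have "\<dots> = Im (\<mu> * z $ l)" by (simp add: zeq)
    finally show "(B *v y) $ l = (Im \<mu> *\<^sub>R x + Re \<mu> *\<^sub>R y) $ l"
      unfolding x_def y_def by (simp add: algebra_simps)
  qed
  moreover have "x \<noteq> 0 \<or> y \<noteq> 0"
  proof (rule ccontr)
    assume "\<not> (x \<noteq> 0 \<or> y \<noteq> 0)"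
    then have "z $ l = 0" for l
      unfolding x_def y_def by (metis complex_eqI vec_lambda_beta zero_complex.sel zero_index)
    then have "v = 0\<^sub>v CARD('n)"
    proof -
      assume z0: "\<And>l. z $ l = 0"
      show ?thesis
      proof (rule eq_vecI)
        show "dim_vec v = dim_vec (0\<^sub>v CARD('n))" using v by simp
        fix j assume "j < dim_vec (0\<^sub>v CARD('n))"
        then have j: "j < CARD('n)" by simp
        have "z $ enum_n j = vec_index v j" unfolding z_def fromV_def using j by simp
        then show "vec_index v j = vec_index (0\<^sub>v CARD('n)) j" using z0 j by simp
      qed
    qed
    with v0 show False by simp
  qed
  ultimately show ?thesis by blast
qed

lemma real_eig_to_eigenvector:
  fixes B :: "real^'n::finite^'n"
  assumes "B *v v = c *\<^sub>R v" "v \<noteq> 0"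
  shows "eigenvector (toM B) (toV v) (complex_of_real c)"
  unfolding eigenvector_def
proof (intro conjI)
  show "toV v \<in> carrier_vec (dim_row (toM B))" using toV_carrier by simp
  show "toV v \<noteq> 0\<^sub>v (dim_row (toM B))"
  proof
    assume h: "toV v = 0\<^sub>v (dim_row (toM B))"
    have "v $ l = 0" for l
    proof -
      have "vec_index (toV v) (ienum_n l) = 0" using h ienum_lt[of l] by simp
      then show ?thesis using ienum_lt[of l] unfolding toV_def by simp
    qed
    then have "v = 0" by (intro cvec_eqI) simp
    with assms(2) show False by simp
  qed
  show "toM B *\<^sub>v toV v = complex_of_real c \<cdot>\<^sub>v toV v"
    unfolding toM_toV assms(1) by (rule eq_vecI) (simp_all add: toV_def)
qed

lemma finite_real_eigenvalues: "finite (real_eigenvalues (B::real^'n::finite^'n))"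
proof -
  have "real_eigenvalues B \<subseteq> Re ` spectrum (toM B)"
  proof
    fix c assume "c \<in> real_eigenvalues B"
    then obtain v where "v \<noteq> 0" "B *v v = c *\<^sub>R v" unfolding real_eigenvalues_def by auto
    then have "complex_of_real c \<in> spectrum (toM B)"
      using real_eig_to_eigenvector unfolding spectrum_def eigenvalue_def by blast
    then show "c \<in> Re ` spectrum (toM B)" by force
  qed
  moreover have "finite (spectrum (toM B))" by (rule card_finite_spectrum(1)[OF toM_carrier])
  ultimately show ?thesis by (meson finite_imageI finite_subset)
qed

lemma exists_eig_pair:
  fixes B :: "real^'n::finite^'n"
  shows "\<exists>a b x y. (x \<noteq> 0 \<or> y \<noteq> 0) \<and> B *v x = a *\<^sub>R x - b *\<^sub>R y
      \<and> B *v y = b *\<^sub>R x + a *\<^sub>R y"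
proof -
  have "spectrum (toM B) \<noteq> {}" by (rule spectrum_non_empty[OF toM_carrier]) simp
  then obtain \<mu> where "\<mu> \<in> spectrum (toM B)" by blast
  then obtain v where "eigenvector (toM B) v \<mu>" unfolding spectrum_def eigenvalue_def by auto
  from eig_to_pair[OF this] show ?thesis by blast
qed

lemma dichotomy:
  fixes B :: "real^'n::finite^'n"
  shows "(\<exists>a b x y. a\<^sup>2 + b\<^sup>2 \<ge> 1 \<and> (x \<noteq> 0 \<or> y \<noteq> 0) \<and> B *v x = a *\<^sub>R x - b *\<^sub>R y
      \<and> B *v y = b *\<^sub>R x + a *\<^sub>R y) \<or> (\<forall>w. bounded (range (\<lambda>k. (((*v) B) ^^ k) w)))"
proof (cases "spectral_radius (toM B) < 1")
  case True
  then obtain c where c: "\<And>k. norm_bound (toM B ^\<^sub>m k) c"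
    using spectral_radius_jnf_norm_bound_less_1_upper_triangular[OF toM_carrier] by blast
  have "bounded (range (\<lambda>k. (((*v) B) ^^ k) w))" for w
  proof -
    define C where "C = (\<Sum>j = 0..<CARD('n). c * norm (vec_index (toV w) j))"
    have comp: "\<bar>((((*v) B) ^^ k) w) $ l\<bar> \<le> C" for k l
    proof -
      let ?P = "toM B ^\<^sub>m k"
      have P: "?P \<in> carrier_mat CARD('n) CARD('n)" by (rule pow_carrier_mat[OF toM_carrier])
      have "\<bar>((((*v) B) ^^ k) w) $ l\<bar> = norm (vec_index (toV ((((*v) B) ^^ k) w)) (ienum_n l))"
        using ienum_lt[of l] unfolding toV_def by simp
      also have "\<dots> = norm (vec_index (?P *\<^sub>v toV w) (ienum_n l))" by (simp add: toM_pow_toV)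
      also have "\<dots> = norm (\<Sum>j = 0..<CARD('n). ?P $$ (ienum_n l, j) * vec_index (toV w) j)"
        using P ienum_lt[of l] toV_carrier[of w] by (simp add: scalar_prod_def)
      also have "\<dots> \<le> (\<Sum>j = 0..<CARD('n). norm (?P $$ (ienum_n l, j) * vec_index (toV w) j))"
        by (rule norm_sum)
      also have "\<dots> \<le> C" unfolding C_def
      proof (rule sum_mono)
        fix j assume "j \<in> {0..<CARD('n)}"
        then have "norm (?P $$ (ienum_n l, j)) \<le> c"
          using c[of k] P ienum_lt[of l] unfolding norm_bound_def by auto
        then show "norm (?P $$ (ienum_n l, j) * vec_index (toV w) j) \<le> c * norm (vec_index (toV w) j)"
          by (simp add: norm_mult mult_right_mono)
      qed
      finally show ?thesis .
    qed
    have "norm ((((*v) B) ^^ k) w) \<le> CARD('n) * C" for k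
    proof -
      have "norm ((((*v) B) ^^ k) w) \<le> (\<Sum>l\<in>UNIV. \<bar>((((*v) B) ^^ k) w) $ l\<bar>)"
        by (rule norm_le_l1_cart)
      also have "\<dots> \<le> (\<Sum>l\<in>(UNIV::'n set). C)" by (rule sum_mono) (rule comp)
      finally show ?thesis by simp
    qed
    then show ?thesis unfolding bounded_iff by blast
  qed
  then show ?thesis by blast
next
  case False
  have "spectral_radius (toM B) \<in> norm ` spectrum (toM B)"
    by (rule spectral_radius_mem_max(1)[OF toM_carrier]) simp
  then obtain \<mu> where mu: "\<mu> \<in> spectrum (toM B)" "norm \<mu> = spectral_radius (toM B)" by auto
  with False have n1: "1 \<le> norm \<mu>" by simp
  have "1 \<le> (Re \<mu>)\<^sup>2 + (Im \<mu>)\<^sup>2"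
  proof -
    have "1 \<le> (norm \<mu>)\<^sup>2" using n1 by (simp add: one_le_power)
    then show ?thesis by (simp add: cmod_power2)
  qed
  moreover obtain v where "eigenvector (toM B) v \<mu>" using mu unfolding spectrum_def eigenvalue_def by auto
  from eig_to_pair[OF this] calculation show ?thesis by blast
qed

definition Pm :: "'n::finite set \<Rightarrow> real^'n^'n" where
  "Pm S = (\<chi> i j. if i = j \<and> i \<in> S then 1 else 0)"

lemma Pm_apply: "(Pm S *v v) $ i = (if i \<in> S then v $ i else 0)"
proof -
  have "(Pm S *v v) $ i = (\<Sum>j\<in>UNIV. (if i = j \<and> i \<in> S then 1 else 0) * v $ j)"
    by (simp add: Pm_def matrix_vector_mult_def)
  also have "\<dots> = (\<Sum>j\<in>UNIV. if j = i then (if i \<in> S then v $ i else 0) else 0)"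
    by (intro sum.cong) auto
  also have "\<dots> = (if i \<in> S then v $ i else 0)" by simp
  finally show ?thesis .
qed

lemma Pm_norm: "norm (Pm S *v v) \<le> norm v"
  by (rule norm_le_componentwise_cart) (simp add: Pm_apply)

lemma Pm_inner: "(Pm S *v v) \<bullet> v = (norm (Pm S *v v))\<^sup>2"
proof -
  have "(Pm S *v v) \<bullet> v = (Pm S *v v) \<bullet> (Pm S *v v)"
    unfolding inner_vec_def by (intro sum.cong) (auto simp: Pm_apply)
  then show ?thesis by (simp add: power2_norm_eq_inner)
qed

lemma block_step_Pm: "block_step a g S x = x + a *\<^sub>R (Pm S *v g x)"
proof -
  have "(\<chi> i. if i \<in> S then g x $ i else 0) = Pm S *v g x" by (rule cvec_eqI) (simp add: Pm_apply)
  then show ?thesis by (simp add: block_step_def)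
qed

lemma Pm_cover: assumes "\<Union>(set Bs) = UNIV" "\<forall>S\<in>set Bs. Pm S *v v = 0" shows "v = 0"
proof (rule cvec_eqI)
  fix i
  have "i \<in> \<Union>(set Bs)" using assms(1) by simp
  then obtain S where S: "S \<in> set Bs" "i \<in> S" by (rule UnionE)
  then have "(Pm S *v v) $ i = 0" using assms(2) by simp
  then show "v $ i = 0 $ i" using S by (simp add: Pm_apply)
qed

locale pbcd =
  fixes f :: "real^'n::finite \<Rightarrow> real"
    and gradf :: "real^'n \<Rightarrow> real^'n"
    and H :: "real^'n \<Rightarrow> real^'n^'n"
    and L \<alpha> :: real
    and Bs :: "'n set list"
    and xs :: "real^'n"
  assumes grad: "\<And>x. (f has_derivative (\<lambda>h. gradf x \<bullet> h)) (at x)"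
    and hess: "\<And>x. (gradf has_derivative (\<lambda>h. H x *v h)) (at x)"
    and hess_cont: "continuous_on UNIV H"
    and Lpos: "L > 0"
    and lip: "\<And>x y. norm (gradf x - gradf y) \<le> L * norm (x - y)"
    and alpha0: "0 < \<alpha>" and alpha1: "\<alpha> < 1 / L"
    and blocks: "block_partition Bs"
    and crit: "gradf xs = 0"
    and saddle: "lambda_min (H xs) < 0"
begin

lemma aL: "\<alpha> * L < 1"
  using alpha1 Lpos by (simp add: field_simps)

lemma hess_bound: "norm (H x *v h) \<le> L * norm h"
proof (rule ccontr)
  assume "\<not> ?thesis"
  then have gt: "norm (H x *v h) > L * norm h" by simp
  then have h0: "h \<noteq> 0" by auto
  then have nh: "norm h > 0" by simp
  define e where "e = (norm (H x *v h) - L * norm h) / (2 * norm h)"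
  have e: "e > 0" unfolding e_def using gt nh by simp
  from hess[of x] e obtain d where d: "d > 0"
    and dd: "\<And>y. norm (y - x) < d \<Longrightarrow> norm (gradf y - gradf x - H x *v (y - x)) \<le> e * norm (y - x)"
    unfolding has_derivative_at_alt by blast
  define t where "t = d / (2 * norm h)"
  have t: "t > 0" unfolding t_def using d nh by simp
  have "norm ((x + t *\<^sub>R h) - x) < d" using t d nh by (simp add: t_def)
  from dd[OF this] have 1: "norm (gradf (x + t *\<^sub>R h) - gradf x - t *\<^sub>R (H x *v h)) \<le> e * (t * norm h)"
    using t by (simp add: matrix_vector_mult_scaleR)
  have 2: "norm (gradf (x + t *\<^sub>R h) - gradf x) \<le> L * (t * norm h)"
    using lip[of "x + t *\<^sub>R h" x] t by simp
  have "t * norm (H x *v h) = norm (t *\<^sub>R (H x *v h))" using t by simp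
  also have "\<dots> \<le> norm (gradf (x + t *\<^sub>R h) - gradf x) + norm (gradf (x + t *\<^sub>R h) - gradf x - t *\<^sub>R (H x *v h))"
    using norm_triangle_ineq4[of "gradf (x + t *\<^sub>R h) - gradf x" "gradf (x + t *\<^sub>R h) - gradf x - t *\<^sub>R (H x *v h)"]
    by simp
  also have "\<dots> \<le> L * (t * norm h) + e * (t * norm h)" using 1 2 by simp
  also have "\<dots> = t * (L * norm h + e * norm h)" by (simp add: algebra_simps)
  finally have "norm (H x *v h) \<le> L * norm h + e * norm h" using t
    by (simp add: mult_le_cancel_left_pos)
  moreover have "e * norm h = (norm (H x *v h) - L * norm h) / 2" unfolding e_def using nh by simp
  ultimately show False using gt by (simp add: field_simps)
qed

lemma mvt_f:
  assumes t: "t > 0"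
  shows "\<exists>p. norm (p - x) \<le> t * (norm u + norm w) \<and>
    f (x + t *\<^sub>R u + t *\<^sub>R w) - f (x + t *\<^sub>R u) - f (x + t *\<^sub>R w) + f x = t\<^sup>2 * ((H p *v w) \<bullet> u)"
proof -
  define \<phi> where "\<phi> s = f (x + s *\<^sub>R u + t *\<^sub>R w) - f (x + s *\<^sub>R u)" for s
  have d\<phi>: "(\<phi> has_derivative (\<lambda>h. gradf (x + s *\<^sub>R u + t *\<^sub>R w) \<bullet> (h *\<^sub>R u) - gradf (x + s *\<^sub>R u) \<bullet> (h *\<^sub>R u))) (at s within {0..t})" for s
  proof -
    have d1: "((\<lambda>s. x + s *\<^sub>R u + t *\<^sub>R w) has_derivative (\<lambda>h. h *\<^sub>R u)) (at s within {0..t})"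
      by (auto intro!: derivative_eq_intros)
    have d2: "((\<lambda>s. x + s *\<^sub>R u) has_derivative (\<lambda>h. h *\<^sub>R u)) (at s within {0..t})"
      by (auto intro!: derivative_eq_intros)
    show ?thesis unfolding \<phi>_def
      by (rule has_derivative_diff[OF has_derivative_compose[OF d1 grad] has_derivative_compose[OF d2 grad]])
  qed
  obtain \<xi> where \<xi>: "\<xi> \<in> {0<..<t}" and e1: "\<phi> t - \<phi> 0 = gradf (x + \<xi> *\<^sub>R u + t *\<^sub>R w) \<bullet> ((t - 0) *\<^sub>R u) - gradf (x + \<xi> *\<^sub>R u) \<bullet> ((t - 0) *\<^sub>R u)"
    using mvt_simple[OF t, of \<phi>, OF d\<phi>] by blast
  define \<psi> where "\<psi> r = gradf (x + \<xi> *\<^sub>R u + r *\<^sub>R w) \<bullet> u" for r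
  have d\<psi>: "(\<psi> has_derivative (\<lambda>h. (H (x + \<xi> *\<^sub>R u + r *\<^sub>R w) *v (h *\<^sub>R w)) \<bullet> u)) (at r within {0..t})" for r
  proof -
    have d1: "((\<lambda>r. x + \<xi> *\<^sub>R u + r *\<^sub>R w) has_derivative (\<lambda>h. h *\<^sub>R w)) (at r within {0..t})"
      by (auto intro!: derivative_eq_intros)
    show ?thesis unfolding \<psi>_def
      by (rule bounded_linear.has_derivative[OF bounded_linear_inner_left has_derivative_compose[OF d1 hess]])
  qed
  obtain \<eta> where \<eta>: "\<eta> \<in> {0<..<t}" and e2: "\<psi> t - \<psi> 0 = (H (x + \<xi> *\<^sub>R u + \<eta> *\<^sub>R w) *v ((t - 0) *\<^sub>R w)) \<bullet> u"
    using mvt_simple[OF t, of \<psi>, OF d\<psi>] by blast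
  define p where "p = x + \<xi> *\<^sub>R u + \<eta> *\<^sub>R w"
  have "f (x + t *\<^sub>R u + t *\<^sub>R w) - f (x + t *\<^sub>R u) - f (x + t *\<^sub>R w) + f x = \<phi> t - \<phi> 0"
    unfolding \<phi>_def by simp
  also have "\<dots> = t * (\<psi> t - \<psi> 0)"
    unfolding e1 \<psi>_def by (simp add: inner_diff_left algebra_simps)
  also have "\<dots> = t\<^sup>2 * ((H p *v w) \<bullet> u)"
    unfolding e2 p_def by (simp add: matrix_vector_mult_scaleR power2_eq_square)
  finally have eq: "f (x + t *\<^sub>R u + t *\<^sub>R w) - f (x + t *\<^sub>R u) - f (x + t *\<^sub>R w) + f x = t\<^sup>2 * ((H p *v w) \<bullet> u)" .
  have "norm (p - x) \<le> norm (\<xi> *\<^sub>R u) + norm (\<eta> *\<^sub>R w)"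
    unfolding p_def using norm_triangle_ineq[of "\<xi> *\<^sub>R u" "\<eta> *\<^sub>R w"] by simp
  also have "\<dots> \<le> t * norm u + t * norm w"
    using \<xi> \<eta> by (auto intro!: add_mono mult_right_mono)
  finally have "norm (p - x) \<le> t * (norm u + norm w)" by (simp add: algebra_simps)
  with eq show ?thesis by blast
qed

lemma H_sym: "(H x *v w) \<bullet> u = (H x *v u) \<bullet> w"
proof (rule ccontr)
  assume ne: "(H x *v w) \<bullet> u \<noteq> (H x *v u) \<bullet> w"
  define g1 where "g1 p = (H p *v w) \<bullet> u" for p
  define g2 where "g2 p = (H p *v u) \<bullet> w" for p
  define d where "d = \<bar>g1 x - g2 x\<bar>"
  have d: "d > 0" using ne unfolding d_def g1_def g2_def by simp
  have Ht: "(H \<longlongrightarrow> H x) (at x)"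
    using hess_cont by (simp add: continuous_on_eq_continuous_at continuous_at)
  have "(g1 \<longlongrightarrow> g1 x) (at x)" unfolding g1_def inner_vec_def matrix_vector_mult_def
    by (intro tendsto_intros Ht)
  then have "isCont g1 x" by (simp add: isCont_def)
  then have "\<forall>\<epsilon>>0. \<exists>\<delta>>0. \<forall>p. dist p x < \<delta> \<longrightarrow> dist (g1 p) (g1 x) < \<epsilon>"
    using continuous_at_eps_delta[of x g1] by simp
  from this[rule_format, of "d/2"] d have "\<exists>e1>0. \<forall>p. dist p x < e1 \<longrightarrow> dist (g1 p) (g1 x) < d / 2"
    by simp
  then obtain e1 where e1: "e1 > 0" "\<And>p. dist p x < e1 \<Longrightarrow> dist (g1 p) (g1 x) < d / 2"
    by blast
  have "(g2 \<longlongrightarrow> g2 x) (at x)" unfolding g2_def inner_vec_def matrix_vector_mult_def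
    by (intro tendsto_intros Ht)
  then have "isCont g2 x" by (simp add: isCont_def)
  then have "\<forall>\<epsilon>>0. \<exists>\<delta>>0. \<forall>p. dist p x < \<delta> \<longrightarrow> dist (g2 p) (g2 x) < \<epsilon>"
    using continuous_at_eps_delta[of x g2] by simp
  from this[rule_format, of "d/2"] d have "\<exists>e2>0. \<forall>p. dist p x < e2 \<longrightarrow> dist (g2 p) (g2 x) < d / 2"
    by simp
  then obtain e2 where e2: "e2 > 0" "\<And>p. dist p x < e2 \<Longrightarrow> dist (g2 p) (g2 x) < d / 2"
    by blast
  define t where "t = min e1 e2 / (2 * (norm u + norm w + 1))"
  have pos: "2 * (norm u + norm w + 1) > 0" using norm_ge_zero[of u] norm_ge_zero[of w] by (smt (verit))
  have t: "t > 0" unfolding t_def using e1 e2 pos by simp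
  have tb: "t * (norm u + norm w) < min e1 e2"
  proof -
    have "t * (norm u + norm w) \<le> t * (norm u + norm w + 1)" using t by simp
    also have "\<dots> = min e1 e2 / 2" unfolding t_def using pos by (simp add: field_simps)
    also have "\<dots> < min e1 e2" using e1(1) e2(1) by (simp add: min_def)
    finally show ?thesis .
  qed
  obtain p where p: "norm (p - x) \<le> t * (norm u + norm w)"
    "f (x + t *\<^sub>R u + t *\<^sub>R w) - f (x + t *\<^sub>R u) - f (x + t *\<^sub>R w) + f x = t\<^sup>2 * g1 p"
    using mvt_f[OF t, of x u w] unfolding g1_def by blast
  obtain p' where p': "norm (p' - x) \<le> t * (norm w + norm u)"
    "f (x + t *\<^sub>R w + t *\<^sub>R u) - f (x + t *\<^sub>R w) - f (x + t *\<^sub>R u) + f x = t\<^sup>2 * g2 p'"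
    using mvt_f[OF t, of x w u] unfolding g2_def by blast
  have "t\<^sup>2 * g1 p = t\<^sup>2 * g2 p'" using p(2) p'(2) by (simp add: algebra_simps)
  then have eq: "g1 p = g2 p'" using t by simp
  have "dist p x < e1" using p(1) tb by (simp add: dist_norm)
  then have 1: "\<bar>g1 p - g1 x\<bar> < d / 2" using e1(2) by (simp add: dist_real_def)
  have "dist p' x < e2" using p'(1) tb by (simp add: dist_norm algebra_simps)
  then have 2: "\<bar>g2 p' - g2 x\<bar> < d / 2" using e2(2) by (simp add: dist_real_def)
  from 1 2 eq have "\<bar>g1 x - g2 x\<bar> < d" by linarith
  then show False unfolding d_def by simp
qed

end

context pbcd begin

definition Q :: "real^'n \<Rightarrow> real" where "Q x = x \<bullet> (H xs *v x)"

definition Mb :: "'n set \<Rightarrow> real^'n^'n" where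
  "Mb S = Finite_Cartesian_Product.mat 1 + \<alpha> *\<^sub>R (Pm S ** H xs)"

lemma Mb_apply: "Mb S *v h = h + \<alpha> *\<^sub>R (Pm S *v (H xs *v h))"
  by (simp add: Mb_def matrix_vector_mult_add_rdistrib matrix_scaleR_vector_ac[symmetric]
      matrix_vector_mult_scaleR matrix_vector_mul_assoc[symmetric])

definition Mprod :: "'n set list \<Rightarrow> real^'n^'n" where
  "Mprod Cs = foldr (\<lambda>S M. Mb S ** M) Cs (Finite_Cartesian_Product.mat 1)"

lemma Mprod_Nil: "Mprod [] *v h = h"
  by (simp add: Mprod_def)

lemma Mprod_Cons: "Mprod (S # Cs) *v h = Mb S *v (Mprod Cs *v h)"
  by (simp add: Mprod_def matrix_vector_mul_assoc)

lemma block_step_fun: "block_step \<alpha> gradf S = (\<lambda>x. x + \<alpha> *\<^sub>R (Pm S *v gradf x))"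
  by (rule ext) (rule block_step_Pm)

lemma block_step_deriv:
  "(block_step \<alpha> gradf S has_derivative (\<lambda>h. h + \<alpha> *\<^sub>R (Pm S *v (H y *v h)))) (at y)"
  unfolding block_step_fun
  by (rule has_derivative_add[OF has_derivative_ident has_derivative_scaleR_right[OF
        bounded_linear.has_derivative[OF matrix_vector_mul_bounded_linear hess]]])

lemma block_step_xs: "block_step \<alpha> gradf S xs = xs"
  by (simp add: block_step_Pm crit)

lemma block_map_Nil: "block_map \<alpha> gradf [] = id"
  by (simp add: block_map_def)

lemma block_map_Cons: "block_map \<alpha> gradf (S # Cs) = block_step \<alpha> gradf S \<circ> block_map \<alpha> gradf Cs"
  by (simp add: block_map_def)

lemma block_map_xs: "block_map \<alpha> gradf Cs xs = xs"
  by (induction Cs) (simp_all add: block_map_Nil block_map_Cons block_step_xs)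

lemma block_map_deriv: "(block_map \<alpha> gradf Cs has_derivative (\<lambda>h. Mprod Cs *v h)) (at xs)"
proof (induction Cs)
  case Nil
  show ?case by (simp add: block_map_Nil Mprod_Nil id_def has_derivative_ident)
next
  case (Cons S Cs)
  have d: "(block_step \<alpha> gradf S has_derivative (\<lambda>h. Mb S *v h)) (at (block_map \<alpha> gradf Cs xs))"
    using block_step_deriv[of S xs] by (simp add: block_map_xs Mb_apply)
  have "(block_step \<alpha> gradf S \<circ> block_map \<alpha> gradf Cs has_derivative (\<lambda>h. Mb S *v h) \<circ> (\<lambda>h. Mprod Cs *v h)) (at xs)"
    by (rule diff_chain_at[OF Cons.IH d])
  then show ?case by (simp add: block_map_Cons Mprod_Cons o_def)
qed

lemma block_step_cont: "continuous_on UNIV (block_step \<alpha> gradf S)"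
  by (meson block_step_deriv continuous_at_imp_continuous_on has_derivative_continuous)

lemma block_map_cont: "continuous_on UNIV (block_map \<alpha> gradf Cs)"
proof (induction Cs)
  case Nil
  show ?case by (simp add: block_map_Nil continuous_on_id)
next
  case (Cons S Cs)
  show ?case unfolding block_map_Cons
    by (rule continuous_on_compose[OF Cons.IH continuous_on_subset[OF block_step_cont]]) simp
qed

lemma block_step_inj: "inj (block_step \<alpha> gradf S)"
proof (rule injI)
  fix x y assume eq: "block_step \<alpha> gradf S x = block_step \<alpha> gradf S y"
  then have "x - y = \<alpha> *\<^sub>R (Pm S *v (gradf y - gradf x))"
    by (simp add: block_step_Pm matrix_vector_mult_diff_distrib scaleR_diff_right algebra_simps)
  then have "norm (x - y) = \<alpha> * norm (Pm S *v (gradf y - gradf x))"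
    using alpha0 by simp
  also have "\<dots> \<le> \<alpha> * norm (gradf y - gradf x)"
    using alpha0 Pm_norm by (simp add: mult_left_mono)
  also have "\<dots> \<le> \<alpha> * (L * norm (y - x))"
    using alpha0 lip by (simp add: mult_left_mono)
  finally have "norm (x - y) \<le> (\<alpha> * L) * norm (x - y)" by (simp add: norm_minus_commute)
  then have "(1 - \<alpha> * L) * norm (x - y) \<le> 0" by (simp add: algebra_simps)
  moreover have "1 - \<alpha> * L > 0" using aL by simp
  ultimately have "norm (x - y) \<le> 0" by (simp add: mult_le_0_iff)
  then show "x = y" by simp
qed

lemma block_map_inj: "inj (block_map \<alpha> gradf Cs)"
proof (induction Cs)
  case Nil
  show ?case by (simp add: block_map_Nil)
next
  case (Cons S Cs)
  show ?case unfolding block_map_Cons by (rule inj_compose[OF block_step_inj Cons.IH])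
qed

lemma Mb_inj: assumes "Mb S *v h = 0" shows "h = 0"
proof -
  have "h = - (\<alpha> *\<^sub>R (Pm S *v (H xs *v h)))" using assms by (simp add: Mb_apply eq_neg_iff_add_eq_0)
  then have "norm h = norm (\<alpha> *\<^sub>R (Pm S *v (H xs *v h)))"
    by (metis norm_minus_cancel)
  also have "\<dots> = \<alpha> * norm (Pm S *v (H xs *v h))" using alpha0 by simp
  also have "\<dots> \<le> \<alpha> * norm (H xs *v h)" using alpha0 Pm_norm by (simp add: mult_left_mono)
  also have "\<dots> \<le> \<alpha> * (L * norm h)" using alpha0 hess_bound by (simp add: mult_left_mono)
  finally have "(1 - \<alpha> * L) * norm h \<le> 0" by (simp add: algebra_simps)
  moreover have "1 - \<alpha> * L > 0" using aL by simp
  ultimately have "norm h \<le> 0" by (simp add: mult_le_0_iff)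
  then show "h = 0" by simp
qed

lemma Mprod_inj: "Mprod Cs *v h = 0 \<Longrightarrow> h = 0"
  by (induction Cs) (auto simp: Mprod_Nil Mprod_Cons dest: Mb_inj)

lemma Mprod_invertible: "\<exists>B. B ** Mprod Bs = Finite_Cartesian_Product.mat 1 \<and> Mprod Bs ** B = Finite_Cartesian_Product.mat 1"
proof -
  have "inj ((*v) (Mprod Bs))"
  proof (rule injI)
    fix a b assume "Mprod Bs *v a = Mprod Bs *v b"
    then have "Mprod Bs *v (a - b) = 0" by (simp add: matrix_vector_mult_diff_distrib)
    then have "a - b = 0" by (rule Mprod_inj)
    then show "a = b" by simp
  qed
  then obtain B where "B ** Mprod Bs = Finite_Cartesian_Product.mat 1"
    using matrix_left_invertible_injective by blast
  then show ?thesis using matrix_left_right_inverse by blast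
qed

definition Jm :: "real^'n^'n" where
  "Jm = (SOME B. B ** Mprod Bs = Finite_Cartesian_Product.mat 1 \<and> Mprod Bs ** B = Finite_Cartesian_Product.mat 1)"

lemma Jm_props: "Jm ** Mprod Bs = Finite_Cartesian_Product.mat 1" "Mprod Bs ** Jm = Finite_Cartesian_Product.mat 1"
  using someI_ex[OF Mprod_invertible] unfolding Jm_def by auto

lemma M_J: "Mprod Bs *v (Jm *v x) = x"
  by (simp add: matrix_vector_mul_assoc Jm_props)

lemma J_M: "Jm *v (Mprod Bs *v x) = x"
  by (simp add: matrix_vector_mul_assoc Jm_props)

lemma inv_deriv: "(inv (block_map \<alpha> gradf Bs) has_derivative (\<lambda>h. Jm *v h)) (at xs)"
proof -
  have "(inv (block_map \<alpha> gradf Bs) has_derivative (\<lambda>h. Jm *v h)) (at (block_map \<alpha> gradf Bs xs))"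
  proof (rule has_derivative_inverse_strong[OF open_UNIV UNIV_I block_map_cont _ block_map_deriv])
    show "\<And>x. x \<in> UNIV \<Longrightarrow> inv (block_map \<alpha> gradf Bs) (block_map \<alpha> gradf Bs x) = x"
      by (simp add: inv_f_f[OF block_map_inj])
    show "(\<lambda>h. Mprod Bs *v h) \<circ> (\<lambda>h. Jm *v h) = id"
      by (rule ext) (simp add: M_J)
  qed
  then show ?thesis by (simp add: block_map_xs)
qed

end

definition cv :: "real^'n::finite \<Rightarrow> real^'n \<Rightarrow> complex^'n" where
  "cv u v = (\<chi> l. Complex (u $ l) (v $ l))"

lemma cv_nth: "cv u v $ l = Complex (u $ l) (v $ l)"
  by (simp add: cv_def)

lemma Jc_cv: "(\<chi> i j. complex_of_real (B $ i $ j)) *v cv u v = cv (B *v u) (B *v v)"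
proof (rule cvec_eqI)
  fix i
  show "((\<chi> i j. complex_of_real (B $ i $ j)) *v cv u v) $ i = cv (B *v u) (B *v v) $ i"
    by (rule complex_eqI) (simp_all add: matrix_vector_mult_def cv_nth Re_sum Im_sum)
qed

context pbcd begin

lemma Q_K: assumes "H xs *v k = 0" shows "Q (x + k) = Q x"
proof -
  have "k \<bullet> (H xs *v x) = (H xs *v x) \<bullet> k" by (simp add: inner_commute)
  also have "\<dots> = (H xs *v k) \<bullet> x" by (rule H_sym)
  also have "\<dots> = 0" using assms by simp
  finally have "k \<bullet> (H xs *v x) = 0" .
  then show ?thesis unfolding Q_def using assms by (simp add: matrix_vector_right_distrib inner_add_left)
qed

lemma cross: "x \<bullet> (H xs *v y) = y \<bullet> (H xs *v x)"
  using H_sym[of xs y x] by (simp add: inner_commute)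

lemma Q_step: "Q y + \<alpha> * (norm (Pm S *v (H xs *v y)))\<^sup>2 \<le> Q (Mb S *v y)"
proof -
  define d where "d = \<alpha> *\<^sub>R (Pm S *v (H xs *v y))"
  define n2 where "n2 = (norm (Pm S *v (H xs *v y)))\<^sup>2"
  have M: "Mb S *v y = y + d" by (simp add: Mb_apply d_def)
  have s: "y \<bullet> (H xs *v d) = d \<bullet> (H xs *v y)" by (rule cross)
  have e1: "Q (y + d) = Q y + 2 * (d \<bullet> (H xs *v y)) + d \<bullet> (H xs *v d)"
    unfolding Q_def using s by (simp add: matrix_vector_right_distrib inner_add_left inner_add_right)
  have e2: "d \<bullet> (H xs *v y) = \<alpha> * n2"
    unfolding d_def n2_def by (simp add: Pm_inner)
  have e3: "- (L * (norm d)\<^sup>2) \<le> d \<bullet> (H xs *v d)"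
  proof -
    have "\<bar>d \<bullet> (H xs *v d)\<bar> \<le> norm d * norm (H xs *v d)" by (rule Cauchy_Schwarz_ineq2)
    also have "\<dots> \<le> norm d * (L * norm d)" by (rule mult_left_mono[OF hess_bound norm_ge_zero])
    also have "\<dots> = L * (norm d)\<^sup>2" by (simp add: power2_eq_square)
    finally show ?thesis using abs_ge_minus_self[of "d \<bullet> (H xs *v d)"] by linarith
  qed
  have e4: "(norm d)\<^sup>2 = \<alpha>\<^sup>2 * n2"
    unfolding d_def n2_def using alpha0 by (simp add: power_mult_distrib)
  have n2: "n2 \<ge> 0" unfolding n2_def by simp
  have k: "0 \<le> \<alpha> * n2 * (1 - \<alpha> * L)"
    by (intro mult_nonneg_nonneg) (use alpha0 n2 aL in auto)
  have "\<alpha> * n2 * (1 - \<alpha> * L) = \<alpha> * n2 - L * (\<alpha>\<^sup>2 * n2)" by (simp add: power2_eq_square algebra_simps)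
  with k have k': "0 \<le> \<alpha> * n2 - L * (\<alpha>\<^sup>2 * n2)" by simp
  have "Q y + \<alpha> * n2 \<le> Q (y + d)" using e1 e2 e3 e4 k' by simp
  then show ?thesis unfolding M n2_def .
qed

lemma Mprod_Q: "Q x \<le> Q (Mprod Cs *v x) \<and> (Q (Mprod Cs *v x) \<le> Q x \<longrightarrow> Mprod Cs *v x = x \<and> (\<forall>S\<in>set Cs. Pm S *v (H xs *v x) = 0))"
proof (induction Cs)
  case Nil
  show ?case unfolding Mprod_Nil by simp
next
  case (Cons S Cs)
  define y where "y = Mprod Cs *v x"
  have IH1: "Q x \<le> Q y" using Cons.IH unfolding y_def by (rule conjunct1)
  have IH2: "Q y \<le> Q x \<Longrightarrow> y = x \<and> (\<forall>S\<in>set Cs. Pm S *v (H xs *v x) = 0)"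
    using Cons.IH unfolding y_def by blast
  have st: "Q y + \<alpha> * (norm (Pm S *v (H xs *v y)))\<^sup>2 \<le> Q (Mb S *v y)" by (rule Q_step)
  have nn: "0 \<le> \<alpha> * (norm (Pm S *v (H xs *v y)))\<^sup>2" using alpha0 by simp
  have eq: "Mprod (S # Cs) *v x = Mb S *v y" by (simp add: Mprod_Cons y_def)
  show ?case unfolding eq
  proof (intro conjI impI)
    show "Q x \<le> Q (Mb S *v y)" using IH1 st nn by linarith
    assume le: "Q (Mb S *v y) \<le> Q x"
    then have "\<alpha> * (norm (Pm S *v (H xs *v y)))\<^sup>2 \<le> 0" using IH1 st by linarith
    with alpha0 have P0: "Pm S *v (H xs *v y) = 0"
      by (simp add: mult_le_0_iff)
    then have My: "Mb S *v y = y" by (simp add: Mb_apply)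
    have "Q y \<le> Q x" using le My by simp
    from IH2[OF this] have yx: "y = x" and rest: "\<forall>S\<in>set Cs. Pm S *v (H xs *v x) = 0" by auto
    show "Mb S *v y = x" using My yx by simp
    show "\<forall>S'\<in>set (S # Cs). Pm S' *v (H xs *v x) = 0" using rest P0 yx by simp
  qed
qed

lemma cover: "\<Union>(set Bs) = UNIV"
  using blocks unfolding block_partition_def by simp

lemma J_Q: "Q (Jm *v x) \<le> Q x"
proof -
  have "Q (Jm *v x) \<le> Q (Mprod Bs *v (Jm *v x))" using Mprod_Q[of "Jm *v x" Bs] by (rule conjunct1)
  then show ?thesis by (simp only: M_J)
qed

lemma J_Q_eq: assumes "Q x \<le> Q (Jm *v x)" shows "H xs *v x = 0"
proof -
  define y where "y = Jm *v x"
  have My: "Mprod Bs *v y = x" unfolding y_def by (simp add: M_J)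
  have A: "Q (Mprod Bs *v y) \<le> Q y \<longrightarrow> Mprod Bs *v y = y \<and> (\<forall>S\<in>set Bs. Pm S *v (H xs *v y) = 0)"
    using Mprod_Q[of y Bs] by (rule conjunct2)
  have "Q (Mprod Bs *v y) \<le> Q y" using assms unfolding y_def by (simp only: M_J)
  with A have B: "Mprod Bs *v y = y" "\<forall>S\<in>set Bs. Pm S *v (H xs *v y) = 0" by blast+
  have "H xs *v y = 0" by (rule Pm_cover[OF cover B(2)])
  moreover have "x = y" using B(1) My by simp
  ultimately show ?thesis by simp
qed

lemma Mprod_fix: "H xs *v k = 0 \<Longrightarrow> Mprod Cs *v k = k"
  by (induction Cs) (simp_all add: Mprod_Nil Mprod_Cons Mb_apply)

lemma J_fix: assumes "H xs *v k = 0" shows "Jm *v k = k"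
  using J_M[of k] Mprod_fix[OF assms, of Bs] by simp

lemma neg_dir: "\<exists>v. Q v < 0"
proof -
  obtain a b x y where ne: "x \<noteq> 0 \<or> y \<noteq> 0" and hx: "H xs *v x = a *\<^sub>R x - b *\<^sub>R y"
    and hy: "H xs *v y = b *\<^sub>R x + a *\<^sub>R y"
    using exists_eig_pair[of "H xs"] by blast
  have c: "x \<bullet> (H xs *v y) = y \<bullet> (H xs *v x)" by (rule cross)
  then have "b * (x \<bullet> x) + a * (x \<bullet> y) = a * (y \<bullet> x) - b * (y \<bullet> y)"
    unfolding hx hy by (simp add: inner_add_right inner_diff_right)
  moreover have "a * (y \<bullet> x) = a * (x \<bullet> y)" by (simp add: inner_commute)
  ultimately have "b * (x \<bullet> x) + b * (y \<bullet> y) = 0" by linarith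
  then have "b * (x \<bullet> x + y \<bullet> y) = 0" by (simp add: distrib_left)
  moreover have "x \<bullet> x + y \<bullet> y > 0"
  proof (cases "x = 0")
    case True
    then have "y \<noteq> 0" using ne by simp
    then have "y \<bullet> y > 0" by simp
    then show ?thesis using inner_ge_zero[of x] by linarith
  next
    case False
    then have "x \<bullet> x > 0" by simp
    then show ?thesis using inner_ge_zero[of y] by linarith
  qed
  ultimately have b0: "b = 0" by simp
  have "a \<in> real_eigenvalues (H xs)"
  proof (cases "x = 0")
    case True
    then have "y \<noteq> 0" using ne by simp
    then show ?thesis unfolding real_eigenvalues_def using hy b0 by auto
  next
    case False
    then show ?thesis unfolding real_eigenvalues_def using hx b0 by auto
  qed
  then have nonempty: "real_eigenvalues (H xs) \<noteq> {}" by blast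
  have "lambda_min (H xs) \<in> real_eigenvalues (H xs)"
    unfolding lambda_min_def by (rule Min_in[OF finite_real_eigenvalues nonempty])
  then obtain v where v: "v \<noteq> 0" "H xs *v v = lambda_min (H xs) *\<^sub>R v"
    unfolding real_eigenvalues_def by auto
  have "Q v = lambda_min (H xs) * (v \<bullet> v)" unfolding Q_def v(2) by simp
  also have "\<dots> < 0" using saddle v(1) by (simp add: mult_neg_pos)
  finally show ?thesis by blast
qed

end

context pbcd begin

definition Kset where "Kset = {x. H xs *v x = 0}"

lemma Kset_subspace: "Real_Vector_Spaces.subspace Kset"
  unfolding Real_Vector_Spaces.subspace_def Kset_def by (simp add: matrix_vector_right_distrib matrix_vector_mult_scaleR)

lemma Bk_ex: "\<exists>B. B \<subseteq> Kset \<and> pairwise real_inner_class.orthogonal B \<and> (\<forall>x\<in>B. norm x = 1) \<and> finite B \<and> Real_Vector_Spaces.span B = Kset"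
proof (rule orthonormal_basis_subspace[OF Kset_subspace])
  fix B assume "B \<subseteq> Kset" "pairwise real_inner_class.orthogonal B" "\<And>x. x \<in> B \<Longrightarrow> norm x = 1"
    "independent B" "card B = dim Kset" "Real_Vector_Spaces.span B = Kset"
  then show ?thesis using independent_imp_finite by blast
qed

definition Bk where
  "Bk = (SOME B. B \<subseteq> Kset \<and> pairwise real_inner_class.orthogonal B \<and> (\<forall>x\<in>B. norm x = 1) \<and> finite B \<and> Real_Vector_Spaces.span B = Kset)"

lemma Bk_all: "Bk \<subseteq> Kset \<and> pairwise real_inner_class.orthogonal Bk \<and> (\<forall>x\<in>Bk. norm x = 1) \<and> finite Bk \<and> Real_Vector_Spaces.span Bk = Kset"
  unfolding Bk_def by (rule someI_ex[OF Bk_ex])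

lemma Bk_orth: "pairwise real_inner_class.orthogonal Bk" using Bk_all by blast
lemma Bk_norm: "x \<in> Bk \<Longrightarrow> norm x = 1" using Bk_all by blast
lemma Bk_span: "Real_Vector_Spaces.span Bk = Kset" using Bk_all by blast
lemma Bk_finite: "finite Bk" using Bk_all by blast

definition E :: "real^'n \<Rightarrow> real^'n" where "E x = (\<Sum>b\<in>Bk. (x \<bullet> b) *\<^sub>R b)"

lemma E_add: "E (x + y) = E x + E y"
  unfolding E_def by (simp add: inner_add_left scaleR_add_left sum.distrib)

lemma E_scale: "E (c *\<^sub>R x) = c *\<^sub>R E x"
  unfolding E_def by (simp add: scaleR_sum_right)

lemma E_diff: "E (x - y) = E x - E y"
  unfolding E_def by (simp add: inner_diff_left scaleR_diff_left sum_subtractf)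

lemma E_lin: "linear E"
  by (rule linearI) (simp_all add: E_add E_scale)

lemma id_lin: "linear (\<lambda>x::real^'n. x)"
  by (rule linearI) simp_all

lemma E_K: "H xs *v E x = 0"
proof -
  have "E x \<in> Real_Vector_Spaces.span Bk" unfolding E_def
  proof (rule span_sum)
    fix b assume "b \<in> Bk"
    then show "(x \<bullet> b) *\<^sub>R b \<in> Real_Vector_Spaces.span Bk" by (rule span_scale[OF span_base])
  qed
  then show ?thesis using Bk_span unfolding Kset_def by simp
qed

lemma E_b: assumes b: "b \<in> Bk" shows "E b = b"
proof -
  have "E b = (\<Sum>b'\<in>Bk. if b' = b then b else 0)"
    unfolding E_def
  proof (rule sum.cong)
    fix b' assume b': "b' \<in> Bk"
    show "(b \<bullet> b') *\<^sub>R b' = (if b' = b then b else 0)"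
    proof (cases "b' = b")
      case True
      then show ?thesis using Bk_norm[OF b] by (simp add: norm_eq_1)
    next
      case False
      then have "b \<noteq> b'" by simp
      then have "real_inner_class.orthogonal b b'" by (rule pairwiseD[OF Bk_orth b b'])
      then show ?thesis using False by (simp add: real_inner_class.orthogonal_def)
    qed
  qed simp
  also have "\<dots> = b" using Bk_finite b by simp
  finally show ?thesis .
qed

lemma E_fix: assumes "H xs *v k = 0" shows "E k = k"
proof -
  have "k \<in> Real_Vector_Spaces.span Bk" using assms Bk_span unfolding Kset_def by simp
  then show ?thesis by (rule linear_eq_on_span[OF E_lin id_lin, rotated]) (rule E_b)
qed

lemma E_idem: "E (E x) = E x"
  by (rule E_fix[OF E_K])

lemma E_neg: "E (- x) = - E x"
  unfolding E_def by (simp add: sum_negf)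

lemma HnegE: "H xs *v (- E x) = 0"
  using E_K[of "- x"] by (simp add: E_neg)

definition Rf where "Rf x = Jm *v x - E (Jm *v x)"

lemma Rf_lin: "linear Rf"
  by (rule linearI) (simp_all add: Rf_def matrix_vector_right_distrib matrix_vector_mult_scaleR E_add E_scale algebra_simps)

definition Rm where "Rm = matrix Rf"

lemma Rm_apply: "Rm *v x = Jm *v x - E (Jm *v x)"
  using fun_cong[OF matrix_vector_mul(2)[OF Rf_lin], of x] unfolding Rm_def Rf_def by simp

lemma E_Rm: "E (Rm *v x) = 0"
  by (simp add: Rm_apply E_diff E_idem)

lemma Q_Rm: "Q (Rm *v x) = Q (Jm *v x)"
  unfolding Rm_apply using Q_K[OF HnegE, of "Jm *v x" "Jm *v x"] by simp

end

context pbcd begin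

lemma Q_comb: "Q (a *\<^sub>R x + b *\<^sub>R y) = a\<^sup>2 * Q x + 2 * a * b * (x \<bullet> (H xs *v y)) + b\<^sup>2 * Q y"
proof -
  have "Q (a *\<^sub>R x + b *\<^sub>R y) = (a *\<^sub>R x + b *\<^sub>R y) \<bullet> (a *\<^sub>R (H xs *v x) + b *\<^sub>R (H xs *v y))"
    unfolding Q_def by (simp add: matrix_vector_right_distrib matrix_vector_mult_scaleR)
  also have "\<dots> = a * a * (x \<bullet> (H xs *v x)) + a * b * (x \<bullet> (H xs *v y)) + b * a * (y \<bullet> (H xs *v x)) + b * b * (y \<bullet> (H xs *v y))"
    by (simp add: inner_add_left inner_add_right algebra_simps)
  also have "\<dots> = a\<^sup>2 * Q x + 2 * a * b * (x \<bullet> (H xs *v y)) + b\<^sup>2 * Q y"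
    using cross[of x y] by (simp add: Q_def power2_eq_square algebra_simps)
  finally show ?thesis .
qed

lemma caseA:
  assumes ab: "1 \<le> a\<^sup>2 + b\<^sup>2" and ne: "x \<noteq> 0 \<or> y \<noteq> 0"
    and rx: "Rm *v x = a *\<^sub>R x - b *\<^sub>R y" and ry: "Rm *v y = b *\<^sub>R x + a *\<^sub>R y"
  shows "\<exists>\<mu> \<in> complex_eigenvalues Jm. norm \<mu> > 1"
proof -
  have h1: "a *\<^sub>R E x - b *\<^sub>R E y = 0" using E_Rm[of x] rx by (simp add: E_diff E_scale)
  have h2: "b *\<^sub>R E x + a *\<^sub>R E y = 0" using E_Rm[of y] ry by (simp add: E_add E_scale)
  have ab0: "a\<^sup>2 + b\<^sup>2 \<noteq> 0" using ab by linarith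
  have "(a\<^sup>2 + b\<^sup>2) *\<^sub>R E x = a *\<^sub>R (a *\<^sub>R E x - b *\<^sub>R E y) + b *\<^sub>R (b *\<^sub>R E x + a *\<^sub>R E y)"
    by (simp add: algebra_simps power2_eq_square)
  then have "(a\<^sup>2 + b\<^sup>2) *\<^sub>R E x = 0" using h1 h2 by simp
  then have Ex: "E x = 0" using ab0 by (metis scaleR_eq_0_iff)
  have "(a\<^sup>2 + b\<^sup>2) *\<^sub>R E y = a *\<^sub>R (b *\<^sub>R E x + a *\<^sub>R E y) - b *\<^sub>R (a *\<^sub>R E x - b *\<^sub>R E y)"
    by (simp add: algebra_simps power2_eq_square)
  then have "(a\<^sup>2 + b\<^sup>2) *\<^sub>R E y = 0" using h1 h2 by simp
  then have Ey: "E y = 0" using ab0 by (metis scaleR_eq_0_iff)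
  define k1 where "k1 = E (Jm *v x)"
  define k2 where "k2 = E (Jm *v y)"
  have K1: "H xs *v k1 = 0" unfolding k1_def by (rule E_K)
  have K2: "H xs *v k2 = 0" unfolding k2_def by (rule E_K)
  have Jx: "Jm *v x = (a *\<^sub>R x - b *\<^sub>R y) + k1"
  proof -
    have "Jm *v x = (Jm *v x - k1) + k1" by simp
    also have "\<dots> = (a *\<^sub>R x - b *\<^sub>R y) + k1" using rx by (simp add: Rm_apply k1_def)
    finally show ?thesis .
  qed
  have Jy: "Jm *v y = (b *\<^sub>R x + a *\<^sub>R y) + k2"
  proof -
    have "Jm *v y = (Jm *v y - k2) + k2" by simp
    also have "\<dots> = (b *\<^sub>R x + a *\<^sub>R y) + k2" using ry by (simp add: Rm_apply k2_def)
    finally show ?thesis .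
  qed
  have QJx: "Q (Jm *v x) = Q (a *\<^sub>R x - b *\<^sub>R y)" unfolding Jx by (rule Q_K[OF K1])
  have QJy: "Q (Jm *v y) = Q (b *\<^sub>R x + a *\<^sub>R y)" unfolding Jy by (rule Q_K[OF K2])
  have cr: "x \<bullet> (H xs *v y) = y \<bullet> (H xs *v x)" by (rule cross)
  have Qsum: "Q (a *\<^sub>R x - b *\<^sub>R y) + Q (b *\<^sub>R x + a *\<^sub>R y) = (a\<^sup>2 + b\<^sup>2) * (Q x + Q y)"
  proof -
    have e: "a *\<^sub>R x - b *\<^sub>R y = a *\<^sub>R x + (- b) *\<^sub>R y" by simp
    show ?thesis unfolding e Q_comb by (simp add: algebra_simps)
  qed
  have JQx: "Q (Jm *v x) \<le> Q x" by (rule J_Q)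
  have JQy: "Q (Jm *v y) \<le> Q y" by (rule J_Q)
  have strict: "Q (Jm *v x) + Q (Jm *v y) < Q x + Q y"
  proof (rule ccontr)
    assume "\<not> ?thesis"
    then have a1: "Q x \<le> Q (Jm *v x)" and a2: "Q y \<le> Q (Jm *v y)" using JQx JQy by linarith+
    have "E x = x" by (rule E_fix[OF J_Q_eq[OF a1]])
    moreover have "E y = y" by (rule E_fix[OF J_Q_eq[OF a2]])
    ultimately show False using Ex Ey ne by simp
  qed
  have gt: "a\<^sup>2 + b\<^sup>2 > 1"
  proof (rule ccontr)
    assume "\<not> a\<^sup>2 + b\<^sup>2 > 1"
    then have "a\<^sup>2 + b\<^sup>2 = 1" using ab by simp
    then have "Q (Jm *v x) + Q (Jm *v y) = Q x + Q y" using QJx QJy Qsum by simp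
    with strict show False by simp
  qed
  define \<mu> where "\<mu> = Complex a b"
  have nmu: "norm \<mu> > 1"
  proof -
    have "1\<^sup>2 < a\<^sup>2 + b\<^sup>2" using gt by simp
    then have "1 < sqrt (a\<^sup>2 + b\<^sup>2)" by (rule real_less_rsqrt)
    then show ?thesis unfolding \<mu>_def norm_complex_def by simp
  qed
  have mu1: "\<mu> \<noteq> 1" using nmu by auto
  define c where "c = 1 / (\<mu> - 1)"
  have muc: "\<mu> * c = c + 1" unfolding c_def using mu1 by (simp add: field_simps)
  define Jc where "Jc = (\<chi> i j. complex_of_real (Jm $ i $ j))"
  define w where "w = cv x y + c *s cv k1 k2"
  have Jk1: "Jm *v k1 = k1" by (rule J_fix[OF K1])
  have Jk2: "Jm *v k2 = k2" by (rule J_fix[OF K2])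
  have "Jc *v w = cv (Jm *v x) (Jm *v y) + c *s cv k1 k2"
    unfolding w_def Jc_def by (simp add: matrix_vector_right_distrib vector_scalar_commute Jc_cv Jk1 Jk2)
  also have "\<dots> = \<mu> *s w"
  proof (rule cvec_eqI)
    fix l
    define z where "z = Complex (x $ l) (y $ l)"
    define kc where "kc = Complex (k1 $ l) (k2 $ l)"
    have "Complex ((Jm *v x) $ l) ((Jm *v y) $ l) = \<mu> * z + kc"
      unfolding Jx Jy \<mu>_def z_def kc_def by (simp add: complex_eq_iff)
    then have "(cv (Jm *v x) (Jm *v y) + c *s cv k1 k2) $ l = \<mu> * z + kc + c * kc"
      by (simp add: cv_nth kc_def)
    also have "\<dots> = \<mu> * z + (\<mu> * c) * kc" by (simp add: muc algebra_simps)
    also have "\<dots> = (\<mu> *s w) $ l" by (simp add: w_def cv_nth z_def kc_def algebra_simps)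
    finally show "(cv (Jm *v x) (Jm *v y) + c *s cv k1 k2) $ l = (\<mu> *s w) $ l" .
  qed
  finally have eig: "Jc *v w = \<mu> *s w" .
  have w0: "w \<noteq> 0"
  proof
    assume w0: "w = 0"
    define p where "p = Re (- c)"
    define q where "q = Im (- c)"
    have comp: "Complex (x $ l) (y $ l) = (- c) * Complex (k1 $ l) (k2 $ l)" for l
    proof -
      have "(cv x y + c *s cv k1 k2) $ l = 0" using w0 unfolding w_def by simp
      then have "cv x y $ l + c * cv k1 k2 $ l = 0"
        by (simp only: vector_add_component vector_smult_component)
      then have "Complex (x $ l) (y $ l) + c * Complex (k1 $ l) (k2 $ l) = 0"
        by (simp only: cv_nth)
      then have "Complex (x $ l) (y $ l) = - (c * Complex (k1 $ l) (k2 $ l))"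
        by (subst eq_neg_iff_add_eq_0)
      then show ?thesis by simp
    qed
    have xe: "x = p *\<^sub>R k1 - q *\<^sub>R k2"
    proof (rule cvec_eqI)
      fix l
      have "x $ l = Re (Complex (x $ l) (y $ l))" by simp
      also have "\<dots> = p * k1 $ l - q * k2 $ l" unfolding comp p_def q_def by simp
      finally show "x $ l = (p *\<^sub>R k1 - q *\<^sub>R k2) $ l" by simp
    qed
    have ye: "y = q *\<^sub>R k1 + p *\<^sub>R k2"
    proof (rule cvec_eqI)
      fix l
      have "y $ l = Im (Complex (x $ l) (y $ l))" by simp
      also have "\<dots> = q * k1 $ l + p * k2 $ l" unfolding comp p_def q_def by simp
      finally show "y $ l = (q *\<^sub>R k1 + p *\<^sub>R k2) $ l" by simp
    qed
    have "H xs *v x = 0" unfolding xe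
      by (simp add: matrix_vector_mult_diff_distrib matrix_vector_mult_scaleR K1 K2)
    then have "E x = x" by (rule E_fix)
    moreover have "H xs *v y = 0" unfolding ye
      by (simp add: matrix_vector_right_distrib matrix_vector_mult_scaleR K1 K2)
    then have "E y = y" by (rule E_fix)
    ultimately show False using Ex Ey ne by simp
  qed
  have "\<mu> \<in> complex_eigenvalues Jm"
    unfolding complex_eigenvalues_def using eig w0 unfolding Jc_def by blast
  with nmu show ?thesis by blast
qed

lemma Q_tendsto: assumes "(X \<longlongrightarrow> l) F" shows "((\<lambda>j. Q (X j)) \<longlongrightarrow> Q l) F"
proof -
  have "((\<lambda>j. H xs *v X j) \<longlongrightarrow> H xs *v l) F"
    by (rule bounded_linear.tendsto[OF matrix_vector_mul_bounded_linear assms])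
  then show ?thesis unfolding Q_def by (rule tendsto_inner[OF assms])
qed

lemma caseB:
  assumes bnd: "\<forall>w. bounded (range (\<lambda>k. (((*v) Rm) ^^ k) w))"
  shows False
proof -
  obtain v0 where v0: "Q v0 < 0" using neg_dir by blast
  define vk where "vk k = (((*v) Jm) ^^ k) v0" for k
  define wk where "wk k = vk k - E (vk k)" for k
  have vS: "vk (Suc k) = Jm *v vk k" for k by (simp add: vk_def)
  have wS: "wk (Suc k) = Rm *v wk k" for k
  proof -
    define u where "u = vk k"
    have JE: "Jm *v E u = E u" by (rule J_fix[OF E_K])
    have "Rm *v wk k = Jm *v (u - E u) - E (Jm *v (u - E u))" by (simp add: Rm_apply wk_def u_def)
    also have "\<dots> = (Jm *v u - E u) - (E (Jm *v u) - E u)"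
      by (simp add: matrix_vector_mult_diff_distrib JE E_diff E_idem)
    also have "\<dots> = wk (Suc k)" by (simp add: wk_def vS u_def)
    finally show ?thesis by simp
  qed
  have wk_iter: "wk k = (((*v) Rm) ^^ k) (wk 0)" for k
    by (induction k) (simp_all add: wS)
  have "wk = (\<lambda>k. (((*v) Rm) ^^ k) (wk 0))" by (rule ext) (rule wk_iter)
  then have bw: "bounded (range wk)" using bnd by metis
  then obtain C where C: "\<And>k. norm (wk k) \<le> C" unfolding bounded_iff by blast
  have Qw: "Q (wk k) = Q (vk k)" for k
    unfolding wk_def using Q_K[OF HnegE, of "vk k" "vk k"] by simp
  have dec: "decseq (\<lambda>k. Q (wk k))"
  proof (rule decseq_SucI)
    fix k show "Q (wk (Suc k)) \<le> Q (wk k)" unfolding Qw vS by (rule J_Q)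
  qed
  have lb: "- (L * C\<^sup>2) \<le> Q (wk k)" for k
  proof -
    have "\<bar>Q (wk k)\<bar> \<le> norm (wk k) * norm (H xs *v wk k)" unfolding Q_def by (rule Cauchy_Schwarz_ineq2)
    also have "\<dots> \<le> norm (wk k) * (L * norm (wk k))" by (rule mult_left_mono[OF hess_bound norm_ge_zero])
    also have "\<dots> = L * (norm (wk k))\<^sup>2" by (simp add: power2_eq_square)
    also have "\<dots> \<le> L * C\<^sup>2" using C[of k] Lpos by (simp add: power_mono)
    finally show ?thesis using abs_ge_minus_self[of "Q (wk k)"] by linarith
  qed
  obtain lv where lim: "(\<lambda>k. Q (wk k)) \<longlonglongrightarrow> lv" and lle: "\<And>i. lv \<le> Q (wk i)"
    using decseq_convergent[OF dec] lb by blast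
  have lneg: "lv < 0" using lle[of 0] v0 Qw[of 0] by (simp add: vk_def)
  obtain l r where r: "strict_mono r" and rl: "(wk \<circ> r) \<longlonglongrightarrow> l"
    using bounded_imp_convergent_subsequence[OF bw] by blast
  have rl': "(\<lambda>j. wk (r j)) \<longlonglongrightarrow> l" using rl by (simp add: o_def)
  have 1: "(\<lambda>j. Q (wk (r j))) \<longlonglongrightarrow> Q l" by (rule Q_tendsto[OF rl'])
  have 2: "(\<lambda>j. Q (wk (r j))) \<longlonglongrightarrow> lv" using LIMSEQ_subseq_LIMSEQ[OF lim r] by (simp add: o_def)
  have Ql: "Q l = lv" using LIMSEQ_unique[OF 1 2] .
  have 3: "(\<lambda>j. wk (Suc (r j))) \<longlonglongrightarrow> Rm *v l"
    unfolding wS by (rule bounded_linear.tendsto[OF matrix_vector_mul_bounded_linear rl'])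
  have 4: "(\<lambda>j. Q (wk (Suc (r j)))) \<longlonglongrightarrow> Q (Rm *v l)" by (rule Q_tendsto[OF 3])
  have 5: "(\<lambda>j. Q (wk (Suc (r j)))) \<longlonglongrightarrow> lv"
    using LIMSEQ_subseq_LIMSEQ[OF LIMSEQ_Suc[OF lim] r] by (simp add: o_def)
  have "Q (Rm *v l) = lv" using LIMSEQ_unique[OF 4 5] .
  then have "Q (Jm *v l) = Q l" using Ql Q_Rm by simp
  then have "H xs *v l = 0" by (intro J_Q_eq) simp
  then have "Q l = 0" unfolding Q_def by simp
  with Ql lneg show False by simp
qed

lemma main_eig: "\<exists>\<mu> \<in> complex_eigenvalues Jm. norm \<mu> > 1"
proof -
  from dichotomy[of Rm] show ?thesis
  proof
    assume "\<exists>a b x y. 1 \<le> a\<^sup>2 + b\<^sup>2 \<and> (x \<noteq> 0 \<or> y \<noteq> 0) \<and> Rm *v x = a *\<^sub>R x - b *\<^sub>R y \<and> Rm *v y = b *\<^sub>R x + a *\<^sub>R y"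
    then obtain a b x y where "1 \<le> a\<^sup>2 + b\<^sup>2" "x \<noteq> 0 \<or> y \<noteq> 0" "Rm *v x = a *\<^sub>R x - b *\<^sub>R y" "Rm *v y = b *\<^sub>R x + a *\<^sub>R y"
      by blast
    then show ?thesis by (rule caseA)
  next
    assume "\<forall>w. bounded (range (\<lambda>k. (((*v) Rm) ^^ k) w))"
    then show ?thesis using caseB by blast
  qed
qed

end

theorem proposition9:
  fixes f :: "real^'n \<Rightarrow> real"
    and gradf :: "real^'n \<Rightarrow> real^'n"
    and H :: "real^'n \<Rightarrow> real^'n^'n"
    and L \<alpha> :: real
    and Bs :: "'n set list"
    and xs :: "real^'n"
  assumes grad: "\<And>x. (f has_derivative (\<lambda>h. gradf x \<bullet> h)) (at x)"
    and hess: "\<And>x. (gradf has_derivative (\<lambda>h. H x *v h)) (at x)"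
    and hess_cont: "continuous_on UNIV H"
    and Lpos: "L > 0"
    and lip: "\<And>x y. norm (gradf x - gradf y) \<le> L * norm (x - y)"
    and alpha: "0 < \<alpha>" "\<alpha> < 1 / L"
    and blocks: "block_partition Bs"
    and crit: "gradf xs = 0"
    and saddle: "lambda_min (H xs) < 0"
  shows "\<exists>J. (inv (block_map \<alpha> gradf Bs) has_derivative (\<lambda>h. J *v h)) (at xs)
             \<and> (\<exists>\<mu> \<in> complex_eigenvalues J. norm \<mu> > 1)"
proof -
  interpret P: pbcd f gradf H L \<alpha> Bs xs
    by (unfold_locales) (use assms in auto)
  show ?thesis using P.inv_deriv P.main_eig by blast
qed

end
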